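(* Let $X$ be a separable Banach space over $\mathbb{K}\in\{\mathbb{R},\mathbb{C}\}$ and $T\colon X\to X$ a bounded linear operator. If there exists a uniformly Li-Yorke scrambled subset of $X$ which has the Baire property and is of second category, then the whole space $X$ is uniformly Li-Yorke scrambled for $T$.
   Context: A subset $S\subset X$ with at least two points is uniformly Li-Yorke scrambled for $T$ if there exist sequences $\{p_n\}$, $\{q_n\}$ in $\mathbb{N}$ such that for all distinct $x,y\in S$: $\lim_n\|T^{p_n}x-T^{p_n}y\|=0$ and $\lim_n\|T^{q_n}x-T^{q_n}y\|=\infty$. A set is of first category if its complement contains a dense $G_\delta$ set, and of second category otherwise. Sets with the Baire property form the smallest $\sigma$-algebra containing all open sets and all sets of first category. *)

theory Defs
  imports "HOL-Analysis.Analysis"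
begin

definition first_category :: "'a::topological_space set \<Rightarrow> bool" where
  "first_category A \<longleftrightarrow> (\<exists>G. gdelta G \<and> closure G = UNIV \<and> G \<subseteq> - A)"

definition second_category :: "'a::topological_space set \<Rightarrow> bool" where
  "second_category A \<longleftrightarrow> \<not> first_category A"

definition has_baire_property :: "'a::topological_space set \<Rightarrow> bool" where
  "has_baire_property A \<longleftrightarrow>
     A \<in> sigma_sets UNIV ({S. open S} \<union> {S. first_category S})"

definition separable_space :: "'a::topological_space itself \<Rightarrow> bool" where
  "separable_space _ \<longleftrightarrow> (\<exists>D::'a set. countable D \<and> closure D = UNIV)"

definition unif_li_yorke_scrambled ::
    "('a::real_normed_vector \<Rightarrow> 'a) \<Rightarrow> 'a set \<Rightarrow> bool" where
  "unif_li_yorke_scrambled T S \<longleftrightarrow>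
     (\<exists>x\<in>S. \<exists>y\<in>S. x \<noteq> y) \<and>
     (\<exists>p q :: nat \<Rightarrow> nat. \<forall>x\<in>S. \<forall>y\<in>S. x \<noteq> y \<longrightarrow>
        ((\<lambda>n. norm ((T ^^ p n) x - (T ^^ p n) y)) \<longlonglongrightarrow> 0) \<and>
        filterlim (\<lambda>n. norm ((T ^^ q n) x - (T ^^ q n) y)) at_top sequentially)"

end

theory Submission
  imports Defs
begin

definition meag :: "'a::topological_space set \<Rightarrow> bool" where
  "meag A \<longleftrightarrow> (\<exists>F. countable F \<and> (\<forall>V\<in>F. open V \<and> closure V = UNIV) \<and> A \<inter> \<Inter>F = {})"

lemma fc_meag: "first_category A \<Longrightarrow> meag A"
proof -
  assume "first_category A"
  then obtain G where G: "gdelta G" "closure G = UNIV" "G \<subseteq> - A"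
    unfolding first_category_def by blast
  from G(1) obtain F :: "nat \<Rightarrow> _" where F: "\<And>n. open (F n)" "G = \<Inter>(F ` UNIV)"
    by (cases rule: gdelta.cases) blast
  have "closure (F n) = UNIV" for n
    using G(2) F(2) closure_mono[of G "F n"] by blast
  then show ?thesis unfolding meag_def
    using F G(3) by (intro exI[of _ "range F"]) auto
qed

lemma meag_fc:
  fixes A :: "'a::complete_space set"
  shows "meag A \<Longrightarrow> first_category A"
proof -
  assume "meag A"
  then obtain F where F: "countable F" "\<forall>V\<in>F. open V \<and> closure V = UNIV" "A \<inter> \<Inter>F = {}"
    unfolding meag_def by blast
  have dense: "closure (\<Inter>F) = UNIV"
    using Baire_category[of euclidean F] completely_metrizable_space_euclidean F
    by auto
  have gd: "gdelta (\<Inter>F)"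
  proof (cases "F = {}")
    case True
    then have "\<Inter>F = \<Inter>(range (\<lambda>n::nat. UNIV::'a set))" by simp
    then show ?thesis by (metis gdelta.intros open_UNIV)
  next
    case False
    then have "F = range (from_nat_into F)" using F(1) by (simp add: range_from_nat_into)
    moreover have "open (from_nat_into F n)" for n
      using F(2) False from_nat_into by blast
    ultimately show ?thesis by (metis gdelta.intros)
  qed
  have sub: "\<Inter>F \<subseteq> - A" using F(3) by blast
  show ?thesis unfolding first_category_def
    by (intro exI[of _ "\<Inter>F"] conjI gd dense sub)
qed

lemma meag_subset: "meag A \<Longrightarrow> B \<subseteq> A \<Longrightarrow> meag B"
proof -
  assume "meag A" "B \<subseteq> A"
  then obtain F where F: "countable F" "\<forall>V\<in>F. open V \<and> closure V = UNIV" "A \<inter> \<Inter>F = {}"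
    unfolding meag_def by blast
  have "B \<inter> \<Inter>F = {}" using F(3) \<open>B \<subseteq> A\<close> by blast
  then show ?thesis unfolding meag_def using F(1,2) by blast
qed

lemma meag_Union:
  assumes "\<And>n::nat. meag (A n)"
  shows "meag (\<Union>(range A))"
proof -
  from assms obtain F where F: "\<And>n. countable (F n) \<and> (\<forall>V\<in>F n. open V \<and> closure V = UNIV) \<and> A n \<inter> \<Inter>(F n) = {}"
    unfolding meag_def by metis
  show ?thesis unfolding meag_def
    apply (intro exI[of _ "\<Union>(range F)"])
    using F by (auto simp: set_eq_iff) blast
qed

lemma meag_Un: "meag A \<Longrightarrow> meag B \<Longrightarrow> meag (A \<union> B)"
proof -
  assume "meag A" "meag B"
  then obtain F1 F2 where "countable F1" "\<forall>V\<in>F1. open V \<and> closure V = UNIV" "A \<inter> \<Inter>F1 = {}"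
    "countable F2" "\<forall>V\<in>F2. open V \<and> closure V = UNIV" "B \<inter> \<Inter>F2 = {}"
    unfolding meag_def by blast
  then show ?thesis unfolding meag_def by (intro exI[of _ "F1 \<union> F2"]) auto
qed

lemma meag_translate:
  fixes A :: "'a::real_normed_vector set"
  assumes "meag A" shows "meag ((+) a ` A)"
proof -
  from assms obtain F where F: "countable F" "\<forall>V\<in>F. open V \<and> closure V = UNIV" "A \<inter> \<Inter>F = {}"
    unfolding meag_def by blast
  have surj: "(+) a ` (UNIV::'a set) = UNIV"
  proof (rule set_eqI)
    fix x show "x \<in> (+) a ` UNIV \<longleftrightarrow> x \<in> UNIV"
      using image_eqI[of x "(+) a" "x - a" UNIV] by simp
  qed
  show ?thesis unfolding meag_def
  proof (intro exI[of _ "(\<lambda>V. (+) a ` V) ` F"] conjI)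
    show "countable ((`) ((+) a) ` F)" using F(1) by simp
  next
    show "\<forall>V\<in>(`) ((+) a) ` F. open V \<and> closure V = UNIV"
    proof
    fix V assume "V \<in> (`) ((+) a) ` F"
    then obtain W where W: "W \<in> F" "V = (+) a ` W" by blast
    have "open V" using W F(2) open_translation[of W a] by auto
    moreover have "closure V = UNIV" using W F(2) closure_translation[of a W] surj by auto
    ultimately show "open V \<and> closure V = UNIV" by blast
    qed
  next
    show "(+) a ` A \<inter> \<Inter> ((`) ((+) a) ` F) = {}"
    proof (rule equals0I)
      fix y assume y: "y \<in> (+) a ` A \<inter> \<Inter> ((`) ((+) a) ` F)"
      then obtain x where x: "x \<in> A" "y = a + x" by auto
      have "x \<in> W" if "W \<in> F" for W
      proof -
        have "a + x \<in> (+) a ` W" using y x that by auto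
        then obtain v where "v \<in> W" "a + x = a + v" by auto
        then show ?thesis by simp
      qed
      then show False using x F(3) by blast
    qed
  qed
qed

lemma meag_nowhere:
  assumes "closed C" "interior C = {}" shows "meag C"
  unfolding meag_def
  apply (intro exI[of _ "{- C}"])
  using assms by (auto simp: closure_complement)

lemma bp_decomp:
  fixes A :: "'a::real_normed_vector set"
  assumes "has_baire_property A"
  shows "\<exists>U. open U \<and> meag ((A - U) \<union> (U - A))"
  using assms unfolding has_baire_property_def
proof (induction rule: sigma_sets.induct)
  case (Basic a)
  then show ?case
  proof
    assume "a \<in> {S. open S}" then show ?thesis
      by (intro exI[of _ a]) (auto simp: meag_def)
  next
    assume "a \<in> {S. first_category S}" then show ?thesis
      using fc_meag by (intro exI[of _ "{}"]) auto
  qed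
next
  case Empty
  then show ?case by (intro exI[of _ "{}"]) (auto simp: meag_def)
next
  case (Compl a)
  then obtain U where U: "open U" "meag ((a - U) \<union> (U - a))" by blast
  let ?C = "- U - interior (- U)"
  have "closed ?C" by (intro closed_Diff open_interior) (use U(1) in auto)
  moreover have "interior ?C = {}"
    using closure_subset[of "interior (- U)"] by (auto simp: interior_diff)
  ultimately have "meag ?C" by (rule meag_nowhere)
  then have "meag (((a - U) \<union> (U - a)) \<union> ?C)" using U(2) meag_Un by blast
  moreover have "((UNIV - a) - interior (- U)) \<union> (interior (- U) - (UNIV - a)) \<subseteq> ((a - U) \<union> (U - a)) \<union> ?C"
    using interior_subset[of "- U"] by auto
  ultimately have "meag (((UNIV - a) - interior (- U)) \<union> (interior (- U) - (UNIV - a)))"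
    by (rule meag_subset)
  then show ?case by (intro exI[of _ "interior (- U)"]) auto
next
  case (Union A)
  then obtain U where U: "\<And>i. open (U i) \<and> meag ((A i - U i) \<union> (U i - A i))" by metis
  have "meag (\<Union>i. (A i - U i) \<union> (U i - A i))" using U by (intro meag_Union) blast
  moreover have "(\<Union>(range A) - \<Union>(range U)) \<union> (\<Union>(range U) - \<Union>(range A)) \<subseteq> (\<Union>i. (A i - U i) \<union> (U i - A i))"
    by auto
  ultimately have "meag ((\<Union>(range A) - \<Union>(range U)) \<union> (\<Union>(range U) - \<Union>(range A)))"
    by (rule meag_subset)
  then show ?case using U by (intro exI[of _ "\<Union>(range U)"]) auto
qed


lemma linear_funpow:
  fixes T :: "'a::real_vector \<Rightarrow> 'a"
  shows "linear T \<Longrightarrow> linear (T ^^ n)"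
proof (induction n)
  case 0 then show ?case by (simp add: real_vector.linear_ident)
next
  case (Suc n) then show ?case using linear_compose[of "T ^^ n" T] by (simp add: comp_def)
qed

lemma comeager_translate_meet:
  fixes S :: "'a::banach set"
  assumes U: "open U" "meag (U - S)" and x0: "ball x0 r \<subseteq> U" and r: "r > 0"
    and w: "norm w = r / 2"
  shows "\<exists>u\<in>S. u - w \<in> S"
proof (rule ccontr)
  assume nex: "\<not> ?thesis"
  let ?B = "ball x0 (r/2)"
  have m1: "meag (?B - S)" using U(2) by (rule meag_subset) (use x0 r in auto)
  have m2: "meag ((+) w ` (U - S))" using U(2) by (rule meag_translate)
  have "?B - (+) w ` S \<subseteq> (+) w ` (U - S)"
  proof
    fix y assume y: "y \<in> ?B - (+) w ` S"
    have "dist x0 (y - w) < r"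
    proof -
      have "dist x0 (y - w) \<le> dist x0 y + norm w"
        by (metis dist_norm dist_triangle2 add_diff_cancel diff_add_cancel dist_diff(1) norm_minus_commute)
      then show ?thesis using y w by auto
    qed
    then have "y - w \<in> U" using x0 by auto
    moreover have "y - w \<notin> S" using y by (metis DiffE add_diff_cancel_left' diff_add_cancel image_eqI add.commute)
    ultimately show "y \<in> (+) w ` (U - S)" by (intro image_eqI[of _ _ "y - w"]) auto
  qed
  then have m3: "meag (?B - (+) w ` S)" using m2 meag_subset by blast
  have "?B \<subseteq> (?B - S) \<union> (?B - (+) w ` S)"
  proof
    fix y assume "y \<in> ?B"
    moreover have "\<not> (y \<in> S \<and> y \<in> (+) w ` S)"
    proof
      assume "y \<in> S \<and> y \<in> (+) w ` S"
      then obtain v where "y \<in> S" "v \<in> S" "y = w + v" by blast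
      then show False using nex by auto
    qed
    ultimately show "y \<in> (?B - S) \<union> (?B - (+) w ` S)" by blast
  qed
  then have "meag ?B" using meag_Un[OF m1 m3] by (rule meag_subset[rotated])
  then have "first_category ?B" by (rule meag_fc)
  then obtain G where G: "closure G = UNIV" "G \<subseteq> - ?B" unfolding first_category_def by blast
  have "?B \<inter> G = {}" using G(2) by blast
  then have "?B \<inter> closure G = {}" using open_Int_closure_eq_empty[of ?B G] by simp
  then have "?B = {}" using G(1) by simp
  moreover have "x0 \<in> ?B" using r by simp
  ultimately show False by simp
qed

theorem corollary3p13:
  fixes T :: "'a::banach \<Rightarrow> 'a"
  assumes "separable_space TYPE('a)"
    and "bounded_linear T"
    and "\<exists>S. unif_li_yorke_scrambled T S \<and> has_baire_property S \<and> second_category S"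
  shows "unif_li_yorke_scrambled T UNIV"
proof -
  obtain S where scr: "unif_li_yorke_scrambled T S" and bp: "has_baire_property S"
    and sc: "second_category S" using assms(3) by blast
  obtain U where U: "open U" "meag ((S - U) \<union> (U - S))" using bp_decomp[OF bp] by blast
  have "U \<noteq> {}"
  proof
    assume "U = {}"
    then have "meag S" using U(2) by simp
    then show False using sc meag_fc unfolding second_category_def by blast
  qed
  then obtain x0 where "x0 \<in> U" by blast
  then obtain r where r: "r > 0" "ball x0 r \<subseteq> U" using U(1) open_contains_ball by blast
  have mUS: "meag (U - S)" using U(2) by (rule meag_subset) auto
  from scr obtain a b p q where ab: "a \<in> S" "b \<in> S" "a \<noteq> b" and
    pq: "\<forall>x\<in>S. \<forall>y\<in>S. x \<noteq> y \<longrightarrow>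
        ((\<lambda>n. norm ((T ^^ p n) x - (T ^^ p n) y)) \<longlonglongrightarrow> 0) \<and>
        filterlim (\<lambda>n. norm ((T ^^ q n) x - (T ^^ q n) y)) at_top sequentially"
    unfolding unif_li_yorke_scrambled_def by blast
  have lin: "linear (T ^^ n)" for n
    using assms(2) bounded_linear.linear linear_funpow by blast
  have two: "\<exists>x\<in>(UNIV::'a set). \<exists>y\<in>UNIV. x \<noteq> y" using ab by blast
  have main: "\<forall>x\<in>(UNIV::'a set). \<forall>y\<in>UNIV. x \<noteq> y \<longrightarrow>
        ((\<lambda>n. norm ((T ^^ p n) x - (T ^^ p n) y)) \<longlonglongrightarrow> 0) \<and>
        filterlim (\<lambda>n. norm ((T ^^ q n) x - (T ^^ q n) y)) at_top sequentially"
  proof (intro ballI impI)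
    fix x y :: 'a assume "x \<noteq> y"
    define z where "z = x - y"
    have z: "z \<noteq> 0" using \<open>x \<noteq> y\<close> z_def by auto
    define c where "c = r / (2 * norm z)"
    have c: "c > 0" using r z c_def by auto
    define w where "w = c *\<^sub>R z"
    have nw: "norm w = r / 2" using c z r unfolding w_def c_def by auto
    obtain u where u: "u \<in> S" "u - w \<in> S"
      using comeager_translate_meet[OF U(1) mUS r(2) r(1) nw] by blast
    have "w \<noteq> 0" using c z w_def by auto
    then have "u \<noteq> u - w" by auto
    then have P: "((\<lambda>n. norm ((T ^^ p n) u - (T ^^ p n) (u - w))) \<longlonglongrightarrow> 0) \<and>
        filterlim (\<lambda>n. norm ((T ^^ q n) u - (T ^^ q n) (u - w))) at_top sequentially"
      using pq u by blast
    have eq: "norm ((T ^^ n) x - (T ^^ n) y) = (1 / c) * norm ((T ^^ n) u - (T ^^ n) (u - w))" for n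
    proof -
      have "(T ^^ n) u - (T ^^ n) (u - w) = (T ^^ n) w" using lin[of n] by (simp add: linear_diff)
      also have "\<dots> = c *\<^sub>R ((T ^^ n) x - (T ^^ n) y)"
        using lin[of n] by (simp add: w_def z_def linear_scale linear_diff)
      finally show ?thesis using c by simp
    qed
    have "(\<lambda>n. (1 / c) * norm ((T ^^ p n) u - (T ^^ p n) (u - w))) \<longlonglongrightarrow> (1/c) * 0"
      using P by (intro tendsto_mult tendsto_const) auto
    then have L: "(\<lambda>n. norm ((T ^^ p n) x - (T ^^ p n) y)) \<longlonglongrightarrow> 0" by (simp add: eq)
    have "filterlim (\<lambda>n. (1 / c) * norm ((T ^^ q n) u - (T ^^ q n) (u - w))) at_top sequentially"
      using P c by (intro filterlim_tendsto_pos_mult_at_top[OF tendsto_const]) auto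
    then have "filterlim (\<lambda>n. norm ((T ^^ q n) x - (T ^^ q n) y)) at_top sequentially" by (simp add: eq)
    with L show "((\<lambda>n. norm ((T ^^ p n) x - (T ^^ p n) y)) \<longlonglongrightarrow> 0) \<and>
        filterlim (\<lambda>n. norm ((T ^^ q n) x - (T ^^ q n) y)) at_top sequentially" by (rule conjI)
  qed
  show ?thesis unfolding unif_li_yorke_scrambled_def
    apply (rule conjI[OF two])
    apply (rule exI[of _ p])
    apply (rule exI[of _ q])
    by (rule main)
qed

end
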